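(* Let $d_{w,1}$ be a Lorentz sequence space (with $p=1$), let $(f_n)$ be the unit vector basis of $\ell_1$, and let $j\colon\ell_1\to d_{w,1}$ be the formal identity. If $T\in L(\ell_1,d_{w,1})$ is such that the set $\{Tf_n:n\in\mathbb N\}$ is almost lengthwise bounded, then for every $\varepsilon>0$ there exists $S\in L(\ell_1)$ such that $\|T-jS\|<\varepsilon$.
   Context: Let $w=(w_n)$ be a real sequence with $w_1=1$, $w_n\downarrow 0$ and $\sum_n w_n=\infty$. The Lorentz sequence space $d_{w,1}$ is the Banach space of all $x=(x_n)\in c_0$ with $\|x\|=\sum_{n}w_n x^*_n<\infty$, where $x^*=(x^*_n)$ is the non-increasing rearrangement of $(|x_n|)$. The formal identity $j\colon\ell_1\to d_{w,1}$ sends the $n$-th unit vector of $\ell_1$ to the $n$-th unit vector of $d_{w,1}$. For a vector $z=(z_i)$ and $N\in\mathbb N$, $z|_{[N,\infty)}$ is the vector with coordinates $z_i$ for $i\ge N$ and $0$ otherwise. A set $A\subseteq d_{w,1}$ is almost lengthwise bounded if for every $\varepsilon>0$ there is $N$ with $\|x^*|_{[N,\infty)}\|<\varepsilon$ for all $x\in A$. *)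

theory Defs
  imports "HOL-Analysis.Analysis"
begin

text \<open>Sequences are functions nat => real, indexed from 0 (index n here is index n+1 in the paper).\<close>

definition ell1 :: "(nat \<Rightarrow> real) set" where
  "ell1 = {x. summable (\<lambda>n. \<bar>x n\<bar>)}"

definition ell1_norm :: "(nat \<Rightarrow> real) \<Rightarrow> real" where
  "ell1_norm x = (\<Sum>n. \<bar>x n\<bar>)"

text \<open>Non-increasing rearrangement of (|x_n|) for x in c_0:
  x*_n = inf over sets F of at most n indices of sup_{i not in F} |x_i|.\<close>
definition dec_rearr :: "(nat \<Rightarrow> real) \<Rightarrow> nat \<Rightarrow> real" where
  "dec_rearr x n = Inf {(SUP i\<in>- F. \<bar>x i\<bar>) | F. finite F \<and> card F \<le> n}"

definition lorentz :: "(nat \<Rightarrow> real) \<Rightarrow> (nat \<Rightarrow> real) set" where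
  "lorentz w = {x. x \<longlonglongrightarrow> 0 \<and> summable (\<lambda>n. w n * dec_rearr x n)}"

definition lorentz_norm :: "(nat \<Rightarrow> real) \<Rightarrow> (nat \<Rightarrow> real) \<Rightarrow> real" where
  "lorentz_norm w x = (\<Sum>n. w n * dec_rearr x n)"

definition lorentz_weight :: "(nat \<Rightarrow> real) \<Rightarrow> bool" where
  "lorentz_weight w \<longleftrightarrow> w 0 = 1 \<and> decseq w \<and> w \<longlonglongrightarrow> 0 \<and> \<not> summable w"

definition unit_vec :: "nat \<Rightarrow> nat \<Rightarrow> real" where
  "unit_vec n = (\<lambda>i. if i = n then 1 else 0)"

definition linear_on_ell1 :: "((nat \<Rightarrow> real) \<Rightarrow> (nat \<Rightarrow> real)) \<Rightarrow> bool" where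
  "linear_on_ell1 T \<longleftrightarrow> (\<forall>x\<in>ell1. \<forall>y\<in>ell1. \<forall>a b::real.
      T (\<lambda>i. a * x i + b * y i) = (\<lambda>i. a * T x i + b * T y i))"

definition bounded_ell1_lorentz :: "(nat \<Rightarrow> real) \<Rightarrow> ((nat \<Rightarrow> real) \<Rightarrow> (nat \<Rightarrow> real)) \<Rightarrow> bool" where
  "bounded_ell1_lorentz w T \<longleftrightarrow> linear_on_ell1 T \<and> T ` ell1 \<subseteq> lorentz w \<and>
      (\<exists>C. \<forall>x\<in>ell1. lorentz_norm w (T x) \<le> C * ell1_norm x)"

definition bounded_ell1 :: "((nat \<Rightarrow> real) \<Rightarrow> (nat \<Rightarrow> real)) \<Rightarrow> bool" where
  "bounded_ell1 S \<longleftrightarrow> linear_on_ell1 S \<and> S ` ell1 \<subseteq> ell1 \<and>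
      (\<exists>C. \<forall>x\<in>ell1. ell1_norm (S x) \<le> C * ell1_norm x)"

definition opnorm_ell1_lorentz :: "(nat \<Rightarrow> real) \<Rightarrow> ((nat \<Rightarrow> real) \<Rightarrow> (nat \<Rightarrow> real)) \<Rightarrow> real" where
  "opnorm_ell1_lorentz w T = (SUP x\<in>{x\<in>ell1. ell1_norm x \<le> 1}. lorentz_norm w (T x))"

definition almost_lengthwise_bounded :: "(nat \<Rightarrow> real) \<Rightarrow> (nat \<Rightarrow> real) set \<Rightarrow> bool" where
  "almost_lengthwise_bounded w A \<longleftrightarrow> (\<forall>\<epsilon>>0. \<exists>N. \<forall>x\<in>A.
      lorentz_norm w (\<lambda>i. if N \<le> i then dec_rearr x i else 0) < \<epsilon>)"

end

theory Submission
  imports Defs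
begin


lemma sup_nonneg:
  fixes x :: "nat \<Rightarrow> real"
  assumes b: "bdd_above (range (\<lambda>i. \<bar>x i\<bar>))" and F: "finite (F::nat set)"
  shows "0 \<le> (SUP i\<in>-F. \<bar>x i\<bar>)"
proof -
  obtain j where j: "j \<notin> F" using F by (meson ex_new_if_finite infinite_UNIV_nat)
  have "\<bar>x j\<bar> \<le> (SUP i\<in>-F. \<bar>x i\<bar>)"
    by (rule cSUP_upper) (use j in \<open>auto intro: bdd_above_mono[OF b]\<close>)
  thus ?thesis by linarith
qed

lemma dr_lower:
  assumes b: "bdd_above (range (\<lambda>i. \<bar>x i\<bar>))" and J: "finite J" "k < card J"
    and t: "\<forall>j\<in>J. t \<le> \<bar>x j\<bar>"
  shows "t \<le> dec_rearr x k"
  unfolding dec_rearr_def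
proof (rule cInf_greatest)
  show "{(SUP i\<in>- F. \<bar>x i\<bar>) |F. finite F \<and> card F \<le> k} \<noteq> {}" by auto
next
  fix s assume "s \<in> {(SUP i\<in>- F. \<bar>x i\<bar>) |F. finite F \<and> card F \<le> k}"
  then obtain F where F: "finite F" "card F \<le> k" and s: "s = (SUP i\<in>- F. \<bar>x i\<bar>)" by auto
  have "\<not> J \<subseteq> F"
  proof
    assume "J \<subseteq> F" hence "card J \<le> card F" by (rule card_mono[OF F(1)])
    thus False using F(2) J(2) by linarith
  qed
  then obtain j where j: "j \<in> J" "j \<notin> F" by auto
  hence "\<bar>x j\<bar> \<le> s" unfolding s
    by (intro cSUP_upper) (auto intro: bdd_above_mono[OF b])
  thus "t \<le> s" using t j by force
qed

lemma dr_nonneg: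
  assumes b: "bdd_above (range (\<lambda>i. \<bar>x i\<bar>))"
  shows "0 \<le> dec_rearr x k"
  by (rule dr_lower[OF b, of "{..k}"]) auto

lemma dr_upper:
  assumes b: "bdd_above (range (\<lambda>i. \<bar>x i\<bar>))" and F: "finite F" "card F \<le> k"
  shows "dec_rearr x k \<le> (SUP i\<in>-F. \<bar>x i\<bar>)"
  unfolding dec_rearr_def
proof (rule cInf_lower)
  show "(SUP i\<in>- F. \<bar>x i\<bar>) \<in> {(SUP i\<in>- F. \<bar>x i\<bar>) |F. finite F \<and> card F \<le> k}"
    using F by auto
  show "bdd_below {(SUP i\<in>- F. \<bar>x i\<bar>) |F. finite F \<and> card F \<le> k}"
    by (rule bdd_belowI[of _ 0]) (auto intro: sup_nonneg[OF b])
qed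

lemma dr_anti:
  assumes b: "bdd_above (range (\<lambda>i. \<bar>x i\<bar>))" and "m \<le> k"
  shows "dec_rearr x k \<le> dec_rearr x m"
  unfolding dec_rearr_def[of x m]
proof (rule cInf_greatest)
  show "{(SUP i\<in>- F. \<bar>x i\<bar>) |F. finite F \<and> card F \<le> m} \<noteq> {}" by auto
next
  fix s assume "s \<in> {(SUP i\<in>- F. \<bar>x i\<bar>) |F. finite F \<and> card F \<le> m}"
  then obtain F where F: "finite F" "card F \<le> m" and s: "s = (SUP i\<in>- F. \<bar>x i\<bar>)" by auto
  show "dec_rearr x k \<le> s" unfolding s using F assms by (intro dr_upper) auto
qed

lemma dr_greedy:
  assumes b: "bdd_above (range (\<lambda>i. \<bar>x i\<bar>))" and d: "\<delta> > 0"
  shows "\<exists>g. inj_on g {..<K} \<and> (\<forall>k<K. dec_rearr x k \<le> \<bar>x (g k)\<bar> + \<delta>)"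
proof (induction K)
  case 0 then show ?case by auto
next
  case (Suc K)
  then obtain g where g: "inj_on g {..<K}" "\<forall>k<K. dec_rearr x k \<le> \<bar>x (g k)\<bar> + \<delta>" by auto
  let ?F = "g ` {..<K}"
  have cF: "card ?F = K" using g(1) by (simp add: card_image)
  have up: "dec_rearr x K \<le> (SUP i\<in>-?F. \<bar>x i\<bar>)" using cF by (intro dr_upper[OF b]) auto
  have ne: "-?F \<noteq> {}" using ex_new_if_finite[OF infinite_UNIV_nat, of ?F] by auto
  have bd: "bdd_above ((\<lambda>i. \<bar>x i\<bar>) ` (-?F))" by (rule bdd_above_mono[OF b]) auto
  have "(SUP i\<in>-?F. \<bar>x i\<bar>) - \<delta> < (SUP i\<in>-?F. \<bar>x i\<bar>)" using d by simp
  then obtain i where i: "i \<in> -?F" "(SUP i\<in>-?F. \<bar>x i\<bar>) - \<delta> < \<bar>x i\<bar>"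
    using less_cSUP_iff[OF ne bd] by auto
  let ?g = "g(K := i)"
  have "inj_on ?g {..<Suc K}"
    using g(1) i(1) unfolding inj_on_def by (auto simp: lessThan_Suc) 
  moreover have "\<forall>k<Suc K. dec_rearr x k \<le> \<bar>x (?g k)\<bar> + \<delta>"
    using g(2) up i(2) by (auto simp: less_Suc_eq)
  ultimately show ?case by blast
qed

lemma abel:
  fixes w a b :: "nat \<Rightarrow> real"
  assumes "decseq w" "\<forall>k. 0 \<le> w k" "\<forall>m\<le>K. sum b {..<m} \<le> sum a {..<m}"
  shows "(\<Sum>k<K. w k * b k) \<le> (\<Sum>k<K. w k * a k)"
proof -
  have "\<forall>L\<le>K. w L * (sum a {..<L} - sum b {..<L}) \<le> (\<Sum>k<L. w k * (a k - b k))"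
  proof (intro allI impI)
    fix L assume "L \<le> K" thus "w L * (sum a {..<L} - sum b {..<L}) \<le> (\<Sum>k<L. w k * (a k - b k))"
    proof (induction L)
      case 0 then show ?case by simp
    next
      case (Suc L)
      have D: "0 \<le> sum a {..<Suc L} - sum b {..<Suc L}" using assms(3) Suc.prems by force
      have "w (Suc L) \<le> w L" using assms(1) by (simp add: decseq_Suc_iff)
      hence "w (Suc L) * (sum a {..<Suc L} - sum b {..<Suc L}) \<le> w L * (sum a {..<Suc L} - sum b {..<Suc L})"
        using D by (simp add: mult_right_mono)
      also have "\<dots> = w L * (sum a {..<L} - sum b {..<L}) + w L * (a L - b L)"
        by (simp add: algebra_simps)
      also have "\<dots> \<le> (\<Sum>k<L. w k * (a k - b k)) + w L * (a L - b L)"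
        using Suc by simp
      finally show ?case by simp
    qed
  qed
  hence "w K * (sum a {..<K} - sum b {..<K}) \<le> (\<Sum>k<K. w k * (a k - b k))" by simp
  moreover have "0 \<le> w K * (sum a {..<K} - sum b {..<K})" using assms by force
  ultimately show ?thesis by (simp add: algebra_simps sum_subtractf)
qed



lemma lim0_bdd:
  fixes x :: "nat \<Rightarrow> real"
  assumes "x \<longlonglongrightarrow> 0" shows "bdd_above (range (\<lambda>i. \<bar>x i\<bar>))"
proof -
  obtain K where "\<forall>n. norm (x n) \<le> K" using convergent_imp_Bseq[OF convergentI[OF assms]] unfolding Bseq_def by auto
  thus ?thesis by (intro bdd_aboveI[of _ K]) auto
qed

lemma argmax_lim0:
  fixes x :: "nat \<Rightarrow> real"
  assumes x: "x \<longlonglongrightarrow> 0" and A: "A \<noteq> {}"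
  shows "\<exists>a\<in>A. \<forall>b\<in>A. \<bar>x b\<bar> \<le> \<bar>x a\<bar>"
proof (cases "\<exists>i\<in>A. x i \<noteq> 0")
  case False
  then show ?thesis using A by auto
next
  case True
  then obtain i where i: "i \<in> A" "x i \<noteq> 0" by auto
  have "\<forall>\<^sub>F n in sequentially. dist (x n) 0 < \<bar>x i\<bar>"
    using x i(2) unfolding tendsto_iff by simp
  hence "\<forall>\<^sub>F n in sequentially. \<bar>x n\<bar> < \<bar>x i\<bar>" by (simp add: dist_real_def)
  then obtain M where M: "\<forall>n\<ge>M. \<bar>x n\<bar> < \<bar>x i\<bar>" unfolding eventually_sequentially by auto
  let ?S = "{b\<in>A. \<bar>x i\<bar> \<le> \<bar>x b\<bar>}"
  have "?S \<subseteq> {..<M}"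
  proof
    fix b assume b: "b \<in> ?S"
    show "b \<in> {..<M}"
    proof (rule ccontr)
      assume "b \<notin> {..<M}" hence "M \<le> b" by simp
      hence "\<bar>x b\<bar> < \<bar>x i\<bar>" using M by blast
      thus False using b by simp
    qed
  qed
  hence fin: "finite ?S" using finite_subset by blast
  have ne: "?S \<noteq> {}" using i by auto
  have "Max ((\<lambda>b. \<bar>x b\<bar>) ` ?S) \<in> (\<lambda>b. \<bar>x b\<bar>) ` ?S" using fin ne by (intro Max_in) auto
  then obtain a where a1: "a \<in> ?S" and a2: "\<bar>x a\<bar> = Max ((\<lambda>b. \<bar>x b\<bar>) ` ?S)" by auto
  have a: "a \<in> ?S" "\<forall>b\<in>?S. \<bar>x b\<bar> \<le> \<bar>x a\<bar>" using a1 a2 fin by auto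
  show ?thesis
  proof (intro bexI ballI)
    fix b assume "b \<in> A" thus "\<bar>x b\<bar> \<le> \<bar>x a\<bar>" using a by (cases "\<bar>x i\<bar> \<le> \<bar>x b\<bar>") auto
  qed (use a in auto)
qed

lemma topset:
  fixes x :: "nat \<Rightarrow> real"
  assumes x: "x \<longlonglongrightarrow> 0"
  shows "\<exists>F. finite F \<and> card F = N \<and> (\<forall>a\<in>F. \<forall>b. b \<notin> F \<longrightarrow> \<bar>x b\<bar> \<le> \<bar>x a\<bar>)"
proof (induction N)
  case 0 then show ?case by auto
next
  case (Suc N)
  then obtain F where F: "finite F" "card F = N" "\<forall>a\<in>F. \<forall>b. b \<notin> F \<longrightarrow> \<bar>x b\<bar> \<le> \<bar>x a\<bar>" by auto
  have ne: "-F \<noteq> {}" using ex_new_if_finite[OF infinite_UNIV_nat F(1)] by auto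
  obtain a where a: "a \<in> -F" "\<forall>b\<in>-F. \<bar>x b\<bar> \<le> \<bar>x a\<bar>" using argmax_lim0[OF x ne] by blast
  have aF: "a \<notin> F" using a(1) by simp
  have f2: "finite (insert a F)" using F(1) by simp
  have c2: "card (insert a F) = Suc N" using F(1,2) aF by simp
  have t2: "\<forall>c\<in>insert a F. \<forall>b. b \<notin> insert a F \<longrightarrow> \<bar>x b\<bar> \<le> \<bar>x c\<bar>"
  proof (intro ballI allI impI)
    fix c b assume c: "c \<in> insert a F" and b: "b \<notin> insert a F"
    show "\<bar>x b\<bar> \<le> \<bar>x c\<bar>"
    proof (cases "c = a")
      case True thus ?thesis using a(2) b by simp
    next
      case False hence "c \<in> F" using c by simp
      thus ?thesis using F(3) b by simp
    qed
  qed
  show ?case using f2 c2 t2 by blast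
qed



lemma v_bdd:
  fixes y :: "nat \<Rightarrow> real"
  assumes b: "bdd_above (range (\<lambda>i. \<bar>y i\<bar>))"
  shows "bdd_above (range (\<lambda>i. \<bar>(if N \<le> i then dec_rearr y i else 0)\<bar>))"
proof (rule bdd_aboveI[of _ "dec_rearr y 0"])
  fix z assume "z \<in> range (\<lambda>i. \<bar>(if N \<le> i then dec_rearr y i else 0)\<bar>)"
  then obtain i where z: "z = \<bar>(if N \<le> i then dec_rearr y i else 0)\<bar>" by auto
  show "z \<le> dec_rearr y 0"
    unfolding z using dr_nonneg[OF b, of i] dr_nonneg[OF b, of 0] dr_anti[OF b, of 0 i] by auto
qed

lemma v_le:
  fixes y :: "nat \<Rightarrow> real"
  assumes b: "bdd_above (range (\<lambda>i. \<bar>y i\<bar>))"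
  shows "dec_rearr (\<lambda>i. if N \<le> i then dec_rearr y i else 0) k \<le> dec_rearr y k"
proof -
  let ?v = "\<lambda>i. if N \<le> i then dec_rearr y i else 0"
  have "dec_rearr ?v k \<le> (SUP i\<in>-{..<k}. \<bar>?v i\<bar>)"
    by (rule dr_upper[OF v_bdd[OF b]]) auto
  also have "\<dots> \<le> dec_rearr y k"
  proof (rule cSUP_least)
    show "-{..<k} \<noteq> {}" by auto
    fix i assume "i \<in> -{..<k}"
    thus "\<bar>?v i\<bar> \<le> dec_rearr y k"
      using dr_nonneg[OF b, of i] dr_nonneg[OF b, of k] dr_anti[OF b, of k i] by auto
  qed
  finally show ?thesis .
qed

lemma tailsum:
  fixes y :: "nat \<Rightarrow> real"
  assumes b: "bdd_above (range (\<lambda>i. \<bar>y i\<bar>))" and F: "finite F" "card F = N"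
    "\<forall>a\<in>F. \<forall>b. b \<notin> F \<longrightarrow> \<bar>y b\<bar> \<le> \<bar>y a\<bar>"
  shows "finite J \<Longrightarrow> card J = m \<Longrightarrow> (\<Sum>j\<in>J. \<bar>if j \<in> F then 0 else y j\<bar>)
     \<le> (\<Sum>k<m. dec_rearr (\<lambda>i. if N \<le> i then dec_rearr y i else 0) k)"
proof (induction m arbitrary: J)
  case 0 then show ?case by simp
next
  case (Suc m)
  let ?r = "\<lambda>j. \<bar>if j \<in> F then 0 else y j\<bar>"
  let ?v = "\<lambda>i. if N \<le> i then dec_rearr y i else 0"
  have Jne: "J \<noteq> {}" using Suc.prems by auto
  have "Min (?r ` J) \<in> ?r ` J" using Suc.prems(1) Jne by (intro Min_in) auto
  then obtain j0 where j1: "j0 \<in> J" and j2: "?r j0 = Min (?r ` J)" by auto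
  have j0: "j0 \<in> J" "\<forall>j\<in>J. ?r j0 \<le> ?r j" using j1 j2 Suc.prems(1) by auto
  have claim: "?r j0 \<le> dec_rearr ?v m"
  proof (cases "?r j0 = 0")
    case True then show ?thesis using dr_nonneg[OF v_bdd[OF b]] by simp
  next
    case False
    let ?t = "?r j0"
    have JF: "J \<inter> F = {}" using j0 False by force
    have Jy: "\<forall>j\<in>J. ?t \<le> \<bar>y j\<bar>" 
    proof
      fix j assume jJ: "j \<in> J"
      hence "j \<notin> F" using JF by auto
      thus "?t \<le> \<bar>y j\<bar>" using j0(2) jJ by force
    qed
    have j0F: "j0 \<notin> F" using JF j0 by auto
    hence tj0: "?t = \<bar>y j0\<bar>" by simp
    have Dy: "\<forall>j\<in>J \<union> F. ?t \<le> \<bar>y j\<bar>" using Jy F(3) j0F tj0 by auto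
    have cD: "card (J \<union> F) = Suc m + N" using Suc.prems F JF by (simp add: card_Un_disjoint)
    have ystar: "\<And>i. i \<le> m + N \<Longrightarrow> ?t \<le> dec_rearr y i"
      by (rule dr_lower[OF b _ _ Dy]) (use Suc.prems F cD in auto)
    show ?thesis unfolding dec_rearr_def[of ?v m]
    proof (rule cInf_greatest)
      show "{(SUP i\<in>- G. \<bar>?v i\<bar>) |G. finite G \<and> card G \<le> m} \<noteq> {}" by auto
    next
      fix s assume "s \<in> {(SUP i\<in>- G. \<bar>?v i\<bar>) |G. finite G \<and> card G \<le> m}"
      then obtain G where G: "finite G" "card G \<le> m" and s: "s = (SUP i\<in>- G. \<bar>?v i\<bar>)" by auto
      have "\<not> {N..N+m} \<subseteq> G"
      proof
        assume "{N..N+m} \<subseteq> G" hence "card {N..N+m} \<le> card G" by (rule card_mono[OF G(1)])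
        thus False using G(2) by simp
      qed
      then obtain i where i: "i \<in> {N..N+m}" "i \<notin> G" by blast
      have bdv: "bdd_above ((\<lambda>i. \<bar>?v i\<bar>) ` (-G))" by (rule bdd_above_mono[OF v_bdd[OF b, of N]]) auto
      have "\<bar>?v i\<bar> \<le> s" unfolding s
        by (rule cSUP_upper) (use i bdv in auto)
      moreover have "?t \<le> \<bar>?v i\<bar>" using i ystar[of i] by auto
      ultimately show "?t \<le> s" by linarith
    qed
  qed
  have "(\<Sum>j\<in>J. ?r j) = ?r j0 + (\<Sum>j\<in>J - {j0}. ?r j)"
    using Suc.prems(1) j0(1) by (simp add: sum.remove)
  also have "(\<Sum>j\<in>J - {j0}. ?r j) \<le> (\<Sum>k<m. dec_rearr ?v k)"
    using Suc.IH[of "J - {j0}"] Suc.prems j0 by auto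
  finally show ?case using claim by simp
qed



lemma w_nonneg: "lorentz_weight w \<Longrightarrow> 0 \<le> w k"
  unfolding lorentz_weight_def using decseq_ge by blast

lemma v_summable:
  assumes lw: "lorentz_weight w" and b: "bdd_above (range (\<lambda>i. \<bar>y i\<bar>))"
    and sy: "summable (\<lambda>k. w k * dec_rearr y k)"
  shows "summable (\<lambda>k. w k * dec_rearr (\<lambda>i. if N \<le> i then dec_rearr y i else 0) k)"
proof (rule summable_comparison_test'[OF sy])
  fix n
  show "norm (w n * dec_rearr (\<lambda>i. if N \<le> i then dec_rearr y i else 0) n) \<le> w n * dec_rearr y n"
    using w_nonneg[OF lw, of n] dr_nonneg[OF v_bdd[OF b], of N n] v_le[OF b, of N n]
    by (simp add: abs_mult mult_left_mono)
qed

lemma rest_est: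
  fixes y :: "nat \<Rightarrow> real"
  assumes lw: "lorentz_weight w" and b: "bdd_above (range (\<lambda>i. \<bar>y i\<bar>))"
    and sy: "summable (\<lambda>k. w k * dec_rearr y k)"
    and F: "finite F" "card F = N" "\<forall>a\<in>F. \<forall>b. b \<notin> F \<longrightarrow> \<bar>y b\<bar> \<le> \<bar>y a\<bar>"
    and g: "inj_on g {..<K}"
  shows "(\<Sum>k<K. w k * \<bar>if g k \<in> F then 0 else y (g k)\<bar>)
    \<le> lorentz_norm w (\<lambda>i. if N \<le> i then dec_rearr y i else 0)"
proof -
  let ?r = "\<lambda>j. \<bar>if j \<in> F then 0 else y j\<bar>"
  let ?v = "\<lambda>i. if N \<le> i then dec_rearr y i else 0"
  have "(\<Sum>k<K. w k * ?r (g k)) \<le> (\<Sum>k<K. w k * dec_rearr ?v k)"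
  proof (rule abel)
    show "decseq w" using lw unfolding lorentz_weight_def by auto
    show "\<forall>k. 0 \<le> w k" using w_nonneg[OF lw] by auto
    show "\<forall>m\<le>K. (\<Sum>k<m. ?r (g k)) \<le> sum (dec_rearr ?v) {..<m}"
    proof (intro allI impI)
      fix m assume m: "m \<le> K"
      have inj: "inj_on g {..<m}" using g m by (auto intro: inj_on_subset)
      have "(\<Sum>k<m. ?r (g k)) = (\<Sum>j\<in>g ` {..<m}. ?r j)" by (simp add: sum.reindex[OF inj])
      also have "\<dots> \<le> sum (dec_rearr ?v) {..<m}"
        by (rule tailsum[OF b F]) (use inj in \<open>auto simp: card_image\<close>)
      finally show "(\<Sum>k<m. ?r (g k)) \<le> sum (dec_rearr ?v) {..<m}" .
    qed
  qed
  also have "\<dots> \<le> lorentz_norm w ?v" unfolding lorentz_norm_def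
    by (rule sum_le_suminf[OF v_summable[OF lw b sy]])
       (auto intro!: mult_nonneg_nonneg w_nonneg[OF lw] dr_nonneg[OF v_bdd[OF b]])
  finally show ?thesis .
qed

lemma coord_le:
  assumes lw: "lorentz_weight w" and u: "u \<in> lorentz w"
  shows "\<bar>u i\<bar> \<le> lorentz_norm w u"
proof -
  have u0: "u \<longlonglongrightarrow> 0" and su: "summable (\<lambda>n. w n * dec_rearr u n)" using u unfolding lorentz_def by auto
  have b: "bdd_above (range (\<lambda>i. \<bar>u i\<bar>))" by (rule lim0_bdd[OF u0])
  have "\<bar>u i\<bar> \<le> dec_rearr u 0" by (rule dr_lower[OF b, of "{i}"]) auto
  also have "\<dots> = (\<Sum>k\<in>{0}. w k * dec_rearr u k)" using lw unfolding lorentz_weight_def by simp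
  also have "\<dots> \<le> lorentz_norm w u" unfolding lorentz_norm_def
    by (rule sum_le_suminf[OF su]) (auto intro!: mult_nonneg_nonneg w_nonneg[OF lw] dr_nonneg[OF b])
  finally show ?thesis .
qed

lemma lnorm_nonneg:
  assumes lw: "lorentz_weight w" and u: "u \<in> lorentz w"
  shows "0 \<le> lorentz_norm w u"
  using coord_le[OF assms, of 0] by linarith



lemma ell1_finsupp: "finite A \<Longrightarrow> (\<And>i. i \<notin> A \<Longrightarrow> x i = 0) \<Longrightarrow> x \<in> ell1"
  unfolding ell1_def by (auto intro!: summable_finite)

lemma unit_vec_ell1: "unit_vec n \<in> ell1"
  by (rule ell1_finsupp[of "{n}"]) (auto simp: unit_vec_def)

lemma unit_vec_norm: "ell1_norm (unit_vec n) = 1"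
  unfolding ell1_norm_def by (subst suminf_finite[of "{n}"]) (auto simp: unit_vec_def)

lemma lin_app:
  assumes "linear_on_ell1 T" "x \<in> ell1" "y \<in> ell1"
  shows "T (\<lambda>i. a * x i + b * y i) = (\<lambda>i. a * T x i + b * T y i)"
  using assms unfolding linear_on_ell1_def by blast

lemma T_zero:
  assumes "linear_on_ell1 T" shows "T (\<lambda>i. 0) = (\<lambda>i. 0)"
proof -
  have z: "(\<lambda>i::nat. 0::real) \<in> ell1" by (rule ell1_finsupp[of "{}"]) auto
  have "T (\<lambda>i. 0 * 0 + 0 * 0) = (\<lambda>i. 0 * T (\<lambda>i. 0) i + 0 * T (\<lambda>i. 0) i)"
    by (rule lin_app[OF assms z z])
  thus ?thesis by simp
qed

lemma T_finsum:
  assumes lin: "linear_on_ell1 T"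
  shows "T (\<lambda>i. if i < K then x i else 0) = (\<lambda>i. \<Sum>n<K. x n * T (unit_vec n) i)"
proof (induction K)
  case 0 then show ?case using T_zero[OF lin] by simp
next
  case (Suc K)
  have e: "(\<lambda>i. if i < Suc K then x i else 0) = (\<lambda>i. 1 * (if i < K then x i else 0) + x K * unit_vec K i)"
    by (rule ext) (auto simp: unit_vec_def less_Suc_eq)
  have m: "(\<lambda>i. if i < K then x i else 0) \<in> ell1" by (rule ell1_finsupp[of "{..<K}"]) auto
  show ?case unfolding e lin_app[OF lin m unit_vec_ell1] Suc by (rule ext) simp
qed

lemma T_coord:
  assumes lw: "lorentz_weight w" and T: "bounded_ell1_lorentz w T" and x: "x \<in> ell1"
  shows "(\<lambda>n. x n * T (unit_vec n) i) sums (T x i)"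
proof -
  have lin: "linear_on_ell1 T" using T unfolding bounded_ell1_lorentz_def by auto
  obtain C where C: "\<forall>x\<in>ell1. lorentz_norm w (T x) \<le> C * ell1_norm x"
    using T unfolding bounded_ell1_lorentz_def by auto
  have into: "\<forall>x\<in>ell1. T x \<in> lorentz w" using T unfolding bounded_ell1_lorentz_def by auto
  have sx: "summable (\<lambda>n. \<bar>x n\<bar>)" using x unfolding ell1_def by auto
  let ?P = "\<lambda>K i. if i < K then x i else 0"
  let ?Q = "\<lambda>K i. if i < K then 0 else x i"
  have Qell: "?Q K \<in> ell1" for K
    unfolding ell1_def by (auto intro: summable_comparison_test'[OF sx])
  have Pell: "?P K \<in> ell1" for K by (rule ell1_finsupp[of "{..<K}"]) auto
  have QT: "T (?Q K) = (\<lambda>i. T x i - T (?P K) i)" for K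
  proof -
    have "T (\<lambda>i. 1 * x i + (-1) * ?P K i) = (\<lambda>i. 1 * T x i + (-1) * T (?P K) i)"
      by (rule lin_app[OF lin x Pell])
    moreover have "(\<lambda>i. 1 * x i + (-1) * ?P K i) = ?Q K" by auto
    ultimately show ?thesis by simp
  qed
  have Qn: "ell1_norm (?Q K) = (\<Sum>n. \<bar>x n\<bar>) - (\<Sum>n<K. \<bar>x n\<bar>)" for K
  proof -
    have "(\<lambda>n. \<bar>?Q K n\<bar>) = (\<lambda>n. \<bar>x n\<bar> - \<bar>?P K n\<bar>)" by auto
    moreover have sP: "summable (\<lambda>n. \<bar>?P K n\<bar>)" by (rule summable_finite[of "{..<K}"]) auto
    moreover have "(\<Sum>n. \<bar>?P K n\<bar>) = (\<Sum>n<K. \<bar>x n\<bar>)" by (subst suminf_finite[of "{..<K}"]) auto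
    ultimately show ?thesis unfolding ell1_norm_def using suminf_diff[OF sx sP] by simp
  qed
  have tl: "(\<lambda>K. ell1_norm (?Q K)) \<longlonglongrightarrow> 0"
    unfolding Qn using tendsto_diff[OF tendsto_const[of "\<Sum>n. \<bar>x n\<bar>"] summable_LIMSEQ[OF sx]] by simp
  have "(\<lambda>K. T x i - T (?P K) i) \<longlonglongrightarrow> 0"
  proof (rule Lim_null_comparison)
    show "\<forall>\<^sub>F K in sequentially. norm (T x i - T (?P K) i) \<le> C * ell1_norm (?Q K)"
    proof (intro always_eventually allI)
      fix K
      have "norm (T x i - T (?P K) i) = \<bar>T (?Q K) i\<bar>" using QT by simp
      also have "\<dots> \<le> lorentz_norm w (T (?Q K))" by (rule coord_le[OF lw]) (use into Qell in auto)
      also have "\<dots> \<le> C * ell1_norm (?Q K)" using C Qell by auto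
      finally show "norm (T x i - T (?P K) i) \<le> C * ell1_norm (?Q K)" .
    qed
    show "(\<lambda>K. C * ell1_norm (?Q K)) \<longlonglongrightarrow> 0" using tendsto_mult_right_zero[OF tl] by simp
  qed
  note l0 = this
  have "(\<lambda>K. T (?P K) i - T x i) \<longlonglongrightarrow> 0" using tendsto_minus[OF l0] by simp
  hence "(\<lambda>K. T (?P K) i) \<longlonglongrightarrow> T x i" by (rule LIM_zero_cancel)
  hence "(\<lambda>K. \<Sum>n<K. x n * T (unit_vec n) i) \<longlonglongrightarrow> T x i" unfolding T_finsum[OF lin] .
  thus ?thesis unfolding sums_def .
qed



theorem theorem6p5:
  fixes w :: "nat \<Rightarrow> real" and T :: "(nat \<Rightarrow> real) \<Rightarrow> (nat \<Rightarrow> real)"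
  assumes "lorentz_weight w"
    and "bounded_ell1_lorentz w T"
    and "almost_lengthwise_bounded w (range (\<lambda>n. T (unit_vec n)))"
    and "\<epsilon> > 0"
  shows "\<exists>S. bounded_ell1 S \<and> opnorm_ell1_lorentz w (\<lambda>x. T x - S x) < \<epsilon>"
proof -
  note lw = assms(1) and Tb = assms(2)
  have lin: "linear_on_ell1 T" using Tb unfolding bounded_ell1_lorentz_def by auto
  obtain C where C: "\<forall>x\<in>ell1. lorentz_norm w (T x) \<le> C * ell1_norm x"
    using Tb unfolding bounded_ell1_lorentz_def by auto
  have into: "\<forall>x\<in>ell1. T x \<in> lorentz w" using Tb unfolding bounded_ell1_lorentz_def by auto
  define y where "y n = T (unit_vec n)" for n
  have yl: "y n \<in> lorentz w" for n unfolding y_def using into unit_vec_ell1 by auto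
  have y0: "y n \<longlonglongrightarrow> 0" and ys: "summable (\<lambda>k. w k * dec_rearr (y n) k)" for n
    using yl[of n] unfolding lorentz_def by auto
  have yb: "bdd_above (range (\<lambda>i. \<bar>y n i\<bar>))" for n by (rule lim0_bdd[OF y0])
  have ycoord: "\<bar>y n i\<bar> \<le> C" for n i
  proof -
    have "\<bar>y n i\<bar> \<le> lorentz_norm w (y n)" by (rule coord_le[OF lw yl])
    also have "\<dots> \<le> C * ell1_norm (unit_vec n)" unfolding y_def using C unit_vec_ell1[of n] by blast
    also have "\<dots> = C" by (simp add: unit_vec_norm)
    finally show ?thesis .
  qed
  define e where "e = \<epsilon> / 2"
  have e: "e > 0" "e < \<epsilon>" using assms(4) unfolding e_def by auto
  obtain N where N: "\<forall>n. lorentz_norm w (\<lambda>i. if N \<le> i then dec_rearr (y n) i else 0) < e"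
    using assms(3) e(1) unfolding almost_lengthwise_bounded_def y_def by blast
  have "\<exists>F. \<forall>n. finite (F n) \<and> card (F n) = N \<and> (\<forall>a\<in>F n. \<forall>b. b \<notin> F n \<longrightarrow> \<bar>y n b\<bar> \<le> \<bar>y n a\<bar>)"
    by (rule choice) (intro allI topset[OF y0])
  then obtain F where F0: "\<forall>n. finite (F n) \<and> card (F n) = N \<and> (\<forall>a\<in>F n. \<forall>b. b \<notin> F n \<longrightarrow> \<bar>y n b\<bar> \<le> \<bar>y n a\<bar>)"
    by (elim exE)
  have F: "\<And>n. finite (F n)" "\<And>n. card (F n) = N"
    "\<And>n. \<forall>a\<in>F n. \<forall>b. b \<notin> F n \<longrightarrow> \<bar>y n b\<bar> \<le> \<bar>y n a\<bar>" using F0 by simp_all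
  define z where "z n i = (if i \<in> F n then y n i else 0)" for n i
  define r where "r n i = (if i \<in> F n then 0 else y n i)" for n i
  have zC: "\<bar>z n i\<bar> \<le> C" and rC: "\<bar>r n i\<bar> \<le> C" for n i
    unfolding z_def r_def using ycoord[of n i] ycoord[of n 0] by auto
  have C0: "0 \<le> C" using ycoord[of 0 0] by linarith
  have zsum: "(\<Sum>i<I. \<bar>z n i\<bar>) \<le> real N * C" for n I
  proof -
    have "(\<Sum>i<I. \<bar>z n i\<bar>) \<le> (\<Sum>i\<in>F n. \<bar>z n i\<bar>)"
    proof -
      have "(\<Sum>i<I. \<bar>z n i\<bar>) = (\<Sum>i\<in>{..<I} \<inter> F n. \<bar>z n i\<bar>)"
        by (rule sum.mono_neutral_right) (auto simp: z_def)
      also have "\<dots> \<le> (\<Sum>i\<in>F n. \<bar>z n i\<bar>)" by (rule sum_mono2[OF F(1)]) auto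
      finally show ?thesis .
    qed
    also have "\<dots> \<le> (\<Sum>i\<in>F n. C)" by (rule sum_mono) (use zC in auto)
    also have "\<dots> = real N * C" using F(2) by simp
    finally show ?thesis .
  qed
  define S where "S x = (\<lambda>i. \<Sum>n. x n * z n i)" for x
  have sabs: "summable (\<lambda>n. \<bar>x n\<bar>)" if "x \<in> ell1" for x using that unfolding ell1_def by auto
  have smz: "summable (\<lambda>n. \<bar>x n * z n i\<bar>)" if "x \<in> ell1" for x i
  proof (rule summable_comparison_test'[OF summable_mult2[OF sabs[OF that], of C]])
    fix n show "norm \<bar>x n * z n i\<bar> \<le> \<bar>x n\<bar> * C"
      using mult_left_mono[OF zC[of n i] abs_ge_zero[of "x n"]] by (simp add: abs_mult)
  qed
  have smr: "summable (\<lambda>n. \<bar>x n * r n i\<bar>)" if "x \<in> ell1" for x i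
  proof (rule summable_comparison_test'[OF summable_mult2[OF sabs[OF that], of C]])
    fix n show "norm \<bar>x n * r n i\<bar> \<le> \<bar>x n\<bar> * C"
      using mult_left_mono[OF rC[of n i] abs_ge_zero[of "x n"]] by (simp add: abs_mult)
  qed
  have smz': "summable (\<lambda>n. x n * z n i)" if "x \<in> ell1" for x i
    by (rule summable_rabs_cancel[OF smz[OF that]])
  have smr': "summable (\<lambda>n. x n * r n i)" if "x \<in> ell1" for x i
    by (rule summable_rabs_cancel[OF smr[OF that]])
  have Sbound: "summable (\<lambda>i. \<bar>S x i\<bar>) \<and> ell1_norm (S x) \<le> (real N * C) * ell1_norm x"
    if x: "x \<in> ell1" for x
  proof -
    have part: "(\<Sum>i<I. \<bar>S x i\<bar>) \<le> (real N * C) * ell1_norm x" for I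
    proof -
      have "(\<Sum>i<I. \<bar>S x i\<bar>) \<le> (\<Sum>i<I. \<Sum>n. \<bar>x n * z n i\<bar>)"
        by (rule sum_mono) (use summable_rabs[OF smz[OF x]] in \<open>auto simp: S_def\<close>)
      also have "\<dots> = (\<Sum>n. \<Sum>i<I. \<bar>x n * z n i\<bar>)"
        by (rule suminf_sum[symmetric]) (use smz[OF x] in auto)
      also have "\<dots> \<le> (\<Sum>n. \<bar>x n\<bar> * (real N * C))"
      proof (rule suminf_le)
        show "summable (\<lambda>n. \<Sum>i<I. \<bar>x n * z n i\<bar>)" by (rule summable_sum) (use smz[OF x] in auto)
        show "summable (\<lambda>n. \<bar>x n\<bar> * (real N * C))" by (rule summable_mult2[OF sabs[OF x]])
        fix n
        have "(\<Sum>i<I. \<bar>x n * z n i\<bar>) = \<bar>x n\<bar> * (\<Sum>i<I. \<bar>z n i\<bar>)"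
          by (simp add: abs_mult sum_distrib_left)
        also have "\<dots> \<le> \<bar>x n\<bar> * (real N * C)" by (rule mult_left_mono[OF zsum]) auto
        finally show "(\<Sum>i<I. \<bar>x n * z n i\<bar>) \<le> \<bar>x n\<bar> * (real N * C)" .
      qed
      also have "\<dots> = (real N * C) * ell1_norm x"
        unfolding ell1_norm_def using suminf_mult2[OF sabs[OF x], of "real N * C"] by (simp add: mult.commute)
      finally show ?thesis .
    qed
    have sm: "summable (\<lambda>i. \<bar>S x i\<bar>)" by (rule summableI_nonneg_bounded[OF _ part]) auto
    moreover have "ell1_norm (S x) \<le> (real N * C) * ell1_norm x"
      using suminf_le_const[OF sm part] by (simp add: ell1_norm_def)
    ultimately show ?thesis by blast
  qed
  have Slin: "linear_on_ell1 S"
    unfolding linear_on_ell1_def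
  proof (intro ballI allI)
    fix x x' a b assume x: "x \<in> ell1" and x': "x' \<in> ell1"
    show "S (\<lambda>i. a * x i + b * x' i) = (\<lambda>i. a * S x i + b * S x' i)"
    proof (rule ext)
      fix i
      have "(\<Sum>n. (a * x n + b * x' n) * z n i) = (\<Sum>n. a * (x n * z n i) + b * (x' n * z n i))"
        by (simp add: algebra_simps)
      also have "\<dots> = a * (\<Sum>n. x n * z n i) + b * (\<Sum>n. x' n * z n i)"
        using suminf_add[OF summable_mult[OF smz'[OF x]] summable_mult[OF smz'[OF x']]]
              suminf_mult[OF smz'[OF x]] suminf_mult[OF smz'[OF x']] by simp
      finally show "S (\<lambda>i. a * x i + b * x' i) i = a * S x i + b * S x' i" unfolding S_def .
    qed
  qed
  have Sbd: "bounded_ell1 S"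
    unfolding bounded_ell1_def
  proof (intro conjI)
    show "linear_on_ell1 S" by (rule Slin)
    show "S ` ell1 \<subseteq> ell1"
    proof
      fix v assume "v \<in> S ` ell1"
      then obtain x where x: "x \<in> ell1" "v = S x" by blast
      show "v \<in> ell1" unfolding ell1_def using Sbound[OF x(1)] x(2) by simp
    qed
    show "\<exists>C. \<forall>x\<in>ell1. ell1_norm (S x) \<le> C * ell1_norm x"
    proof (intro exI ballI)
      fix x assume "x \<in> ell1" thus "ell1_norm (S x) \<le> (real N * C) * ell1_norm x" using Sbound by blast
    qed
  qed
  have diff: "(T x - S x) i = (\<Sum>n. x n * r n i)" if x: "x \<in> ell1" for x i
  proof -
    have "T x i = (\<Sum>n. x n * y n i)" using T_coord[OF lw Tb x, of i] unfolding y_def by (simp add: sums_iff)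
    moreover have "(\<lambda>n. x n * y n i) = (\<lambda>n. x n * z n i + x n * r n i)"
      by (rule ext) (simp add: z_def r_def)
    ultimately have "T x i = (\<Sum>n. x n * z n i) + (\<Sum>n. x n * r n i)"
      using suminf_add[OF smz'[OF x] smr'[OF x]] by simp
    thus ?thesis unfolding S_def by simp
  qed
  have rest: "(\<Sum>k<K. w k * \<bar>r n (g k)\<bar>) \<le> e" if g: "inj_on g {..<K}" for n g K
  proof -
    have "(\<Sum>k<K. w k * \<bar>r n (g k)\<bar>) \<le> lorentz_norm w (\<lambda>i. if N \<le> i then dec_rearr (y n) i else 0)"
      unfolding r_def by (rule rest_est[OF lw yb ys F(1) F(2) F(3) g])
    thus ?thesis using N[rule_format, of n] by linarith
  qed
  have main: "lorentz_norm w (T x - S x) \<le> e" if x: "x \<in> ell1" and x1: "ell1_norm x \<le> 1" for x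
  proof -
    define u where "u = T x - S x"
    have ui: "u i = (\<Sum>n. x n * r n i)" for i unfolding u_def by (rule diff[OF x])
    have uabs: "\<bar>u i\<bar> \<le> (\<Sum>n. \<bar>x n * r n i\<bar>)" for i unfolding ui by (rule summable_rabs[OF smr[OF x]])
    have nx0: "0 \<le> ell1_norm x" unfolding ell1_norm_def by (rule suminf_nonneg[OF sabs[OF x]]) auto
    have ub: "bdd_above (range (\<lambda>i. \<bar>u i\<bar>))"
    proof (rule bdd_aboveI[of _ "C * ell1_norm x"])
      fix t assume "t \<in> range (\<lambda>i. \<bar>u i\<bar>)"
      then obtain i where t: "t = \<bar>u i\<bar>" by auto
      have "(\<Sum>n. \<bar>x n * r n i\<bar>) \<le> (\<Sum>n. \<bar>x n\<bar> * C)"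
      proof (rule suminf_le)
        fix n show "\<bar>x n * r n i\<bar> \<le> \<bar>x n\<bar> * C"
          by (simp add: abs_mult, intro mult_left_mono rC abs_ge_zero)
      qed (use smr[OF x] summable_mult2[OF sabs[OF x]] in auto)
      also have "\<dots> = C * ell1_norm x" unfolding ell1_norm_def using suminf_mult2[OF sabs[OF x], of C] by (simp add: mult.commute)
      finally show "t \<le> C * ell1_norm x" using uabs[of i] t by linarith
    qed
    have wn: "\<And>k. 0 \<le> w k" by (rule w_nonneg[OF lw])
    have part: "(\<Sum>k<K. w k * dec_rearr u k) \<le> e" for K
    proof (rule field_le_epsilon)
      fix d :: real assume d: "0 < d"
      define W where "W = (\<Sum>k<K. w k)"
      have W0: "0 \<le> W" unfolding W_def by (rule sum_nonneg) (use wn in auto)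
      define \<delta> where "\<delta> = d / (W + 1)"
      have dl: "\<delta> > 0" unfolding \<delta>_def using d W0 by auto
      obtain g where g: "inj_on g {..<K}" "\<forall>k<K. dec_rearr u k \<le> \<bar>u (g k)\<bar> + \<delta>"
        using dr_greedy[OF ub dl] by blast
      have "(\<Sum>k<K. w k * dec_rearr u k) \<le> (\<Sum>k<K. w k * (\<bar>u (g k)\<bar> + \<delta>))"
      proof (rule sum_mono)
        fix k assume k: "k \<in> {..<K}"
        show "w k * dec_rearr u k \<le> w k * (\<bar>u (g k)\<bar> + \<delta>)"
          by (rule mult_left_mono) (use g(2) k wn in auto)
      qed
      also have "\<dots> = (\<Sum>k<K. w k * \<bar>u (g k)\<bar>) + \<delta> * W"
        unfolding W_def by (simp add: algebra_simps sum.distrib sum_distrib_left)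
      also have "(\<Sum>k<K. w k * \<bar>u (g k)\<bar>) \<le> (\<Sum>k<K. w k * (\<Sum>n. \<bar>x n * r n (g k)\<bar>))"
      proof (rule sum_mono)
        fix k assume k: "k \<in> {..<K}"
        show "w k * \<bar>u (g k)\<bar> \<le> w k * (\<Sum>n. \<bar>x n * r n (g k)\<bar>)"
          by (rule mult_left_mono) (use uabs wn in auto)
      qed
      also have "\<dots> = (\<Sum>k<K. \<Sum>n. \<bar>x n\<bar> * (w k * \<bar>r n (g k)\<bar>))"
        by (rule sum.cong[OF refl]) (use suminf_mult[OF smr[OF x]] in \<open>simp add: abs_mult algebra_simps\<close>)
      also have "\<dots> = (\<Sum>n. \<Sum>k<K. \<bar>x n\<bar> * (w k * \<bar>r n (g k)\<bar>))"
      proof (rule suminf_sum[symmetric])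
        fix k show "summable (\<lambda>n. \<bar>x n\<bar> * (w k * \<bar>r n (g k)\<bar>))"
          using summable_mult[OF smr[OF x], of "w k"] by (simp add: abs_mult algebra_simps)
      qed
      also have "\<dots> \<le> (\<Sum>n. \<bar>x n\<bar> * e)"
      proof (rule suminf_le)
        show "summable (\<lambda>n. \<Sum>k<K. \<bar>x n\<bar> * (w k * \<bar>r n (g k)\<bar>))"
        proof (rule summable_sum)
          fix k show "summable (\<lambda>n. \<bar>x n\<bar> * (w k * \<bar>r n (g k)\<bar>))"
            using summable_mult[OF smr[OF x], of "w k"] by (simp add: abs_mult algebra_simps)
        qed
        show "summable (\<lambda>n. \<bar>x n\<bar> * e)" by (rule summable_mult2[OF sabs[OF x]])
        fix n
        have "(\<Sum>k<K. \<bar>x n\<bar> * (w k * \<bar>r n (g k)\<bar>)) = \<bar>x n\<bar> * (\<Sum>k<K. w k * \<bar>r n (g k)\<bar>)"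
          by (simp add: sum_distrib_left)
        also have "\<dots> \<le> \<bar>x n\<bar> * e" by (rule mult_left_mono[OF rest[OF g(1)]]) auto
        finally show "(\<Sum>k<K. \<bar>x n\<bar> * (w k * \<bar>r n (g k)\<bar>)) \<le> \<bar>x n\<bar> * e" .
      qed
      also have "\<dots> = e * ell1_norm x"
        unfolding ell1_norm_def using suminf_mult2[OF sabs[OF x], of e] by (simp add: mult.commute)
      also have "\<dots> \<le> e" using x1 e(1) nx0 by (simp add: mult_left_le)
      finally have "(\<Sum>k<K. w k * dec_rearr u k) \<le> e + \<delta> * W" by simp
      moreover have "\<delta> * W \<le> d"
      proof -
        have "\<delta> * W = d * (W / (W + 1))" unfolding \<delta>_def by simp
        also have "\<dots> \<le> d * 1" using W0 d by (intro mult_left_mono) auto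
        finally show ?thesis by simp
      qed
      ultimately show "(\<Sum>k<K. w k * dec_rearr u k) \<le> e + d" by linarith
    qed
    have nn: "\<And>k. 0 \<le> w k * dec_rearr u k" using wn dr_nonneg[OF ub] by (simp add: mult_nonneg_nonneg)
    have sm: "summable (\<lambda>k. w k * dec_rearr u k)" by (rule summableI_nonneg_bounded[OF nn part])
    show ?thesis unfolding u_def[symmetric] lorentz_norm_def by (rule suminf_le_const[OF sm part])
  qed
  have "opnorm_ell1_lorentz w (\<lambda>x. T x - S x) \<le> e"
    unfolding opnorm_ell1_lorentz_def
  proof (rule cSUP_least)
    have "(\<lambda>i. 0::real) \<in> ell1" by (rule ell1_finsupp[of "{}"]) auto
    moreover have "ell1_norm (\<lambda>i. 0::real) \<le> 1" by (simp add: ell1_norm_def)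
    ultimately show "{x \<in> ell1. ell1_norm x \<le> 1} \<noteq> {}" by blast
    fix x assume "x \<in> {x \<in> ell1. ell1_norm x \<le> 1}"
    thus "lorentz_norm w (T x - S x) \<le> e" using main by blast
  qed
  hence "opnorm_ell1_lorentz w (\<lambda>x. T x - S x) < \<epsilon>" using e(2) by linarith
  thus ?thesis using Sbd by blast
qed


end
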